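(* A finite connected simple undirected graph $Y$ is bipartite if and only if $\kappa(Y)$ is odd.
   Context: A click at a vertex $x$ that is a source of an orientation reverses all edges incident to $x$, making $x$ a sink. Two acyclic orientations of $Y$ are $\kappa$-equivalent if one can be transformed into the other by a finite sequence of clicks; $\kappa(Y)$ is the number of $\kappa$-equivalence classes of acyclic orientations of $Y$. *)

theory Defs
  imports Main
begin

definition simple_graph :: "'a set \<Rightarrow> ('a \<Rightarrow> 'a \<Rightarrow> bool) \<Rightarrow> bool" where
  "simple_graph V E \<longleftrightarrow> finite V \<and> (\<forall>u v. E u v \<longrightarrow> u \<in> V \<and> v \<in> V)
     \<and> (\<forall>u v. E u v \<longrightarrow> E v u) \<and> (\<forall>u. \<not> E u u)"

definition connected_graph :: "'a set \<Rightarrow> ('a \<Rightarrow> 'a \<Rightarrow> bool) \<Rightarrow> bool" where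
  "connected_graph V E \<longleftrightarrow> (\<forall>u\<in>V. \<forall>v\<in>V. (u, v) \<in> {(x, y). E x y}\<^sup>*)"

definition bipartite :: "'a set \<Rightarrow> ('a \<Rightarrow> 'a \<Rightarrow> bool) \<Rightarrow> bool" where
  "bipartite V E \<longleftrightarrow> (\<exists>A \<subseteq> V. \<forall>u v. E u v \<longrightarrow> (u \<in> A \<longleftrightarrow> v \<notin> A))"

definition orientation :: "('a \<Rightarrow> 'a \<Rightarrow> bool) \<Rightarrow> ('a \<Rightarrow> 'a \<Rightarrow> bool) \<Rightarrow> bool" where
  "orientation E D \<longleftrightarrow> (\<forall>u v. D u v \<longrightarrow> E u v) \<and> (\<forall>u v. E u v \<longrightarrow> (D u v \<longleftrightarrow> \<not> D v u))"

definition acyclic_orientation :: "('a \<Rightarrow> 'a \<Rightarrow> bool) \<Rightarrow> ('a \<Rightarrow> 'a \<Rightarrow> bool) \<Rightarrow> bool" where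
  "acyclic_orientation E D \<longleftrightarrow> orientation E D \<and> acyclic {(u, v). D u v}"

definition acyc_orients :: "('a \<Rightarrow> 'a \<Rightarrow> bool) \<Rightarrow> ('a \<Rightarrow> 'a \<Rightarrow> bool) set" where
  "acyc_orients E = {D. acyclic_orientation E D}"

definition is_source :: "'a set \<Rightarrow> ('a \<Rightarrow> 'a \<Rightarrow> bool) \<Rightarrow> 'a \<Rightarrow> bool" where
  "is_source V D x \<longleftrightarrow> x \<in> V \<and> (\<forall>y. \<not> D y x)"

definition click :: "'a \<Rightarrow> ('a \<Rightarrow> 'a \<Rightarrow> bool) \<Rightarrow> ('a \<Rightarrow> 'a \<Rightarrow> bool)" where
  "click x D = (\<lambda>u v. if u = x \<or> v = x then D v u else D u v)"

definition click_step :: "'a set \<Rightarrow> ('a \<Rightarrow> 'a \<Rightarrow> bool)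
    \<Rightarrow> (('a \<Rightarrow> 'a \<Rightarrow> bool) \<times> ('a \<Rightarrow> 'a \<Rightarrow> bool)) set" where
  "click_step V E = {(D, D'). D \<in> acyc_orients E \<and> (\<exists>x. is_source V D x \<and> D' = click x D)}"

definition kappa_equiv :: "'a set \<Rightarrow> ('a \<Rightarrow> 'a \<Rightarrow> bool)
    \<Rightarrow> (('a \<Rightarrow> 'a \<Rightarrow> bool) \<times> ('a \<Rightarrow> 'a \<Rightarrow> bool)) set" where
  "kappa_equiv V E = (click_step V E \<union> (click_step V E)\<inverse>)\<^sup>*"

definition kappa :: "'a set \<Rightarrow> ('a \<Rightarrow> 'a \<Rightarrow> bool) \<Rightarrow> nat" where
  "kappa V E = card (acyc_orients E // kappa_equiv V E)"

end

theory Submission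
  imports Defs
begin

definition sg :: "('a \<Rightarrow> 'a \<Rightarrow> bool) \<Rightarrow> 'a \<Rightarrow> 'a \<Rightarrow> int" where
  "sg D u v = (if D u v then 1 else -1)"

definition Rel :: "('a \<Rightarrow> 'a \<Rightarrow> bool) \<Rightarrow> ('a \<Rightarrow> 'a \<Rightarrow> bool) \<Rightarrow> ('a \<Rightarrow> 'a \<Rightarrow> bool) \<Rightarrow> bool" where
  "Rel E D D' \<longleftrightarrow> (\<exists>p::'a \<Rightarrow> int. \<forall>u v. E u v \<longrightarrow> sg D' u v = sg D u v - 2 * (p u - p v))"

definition tr :: "('a \<Rightarrow> 'a \<Rightarrow> bool) \<Rightarrow> ('a \<Rightarrow> 'a \<Rightarrow> bool)" where
  "tr D = (\<lambda>u v. D v u)"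

lemma tr_tr[simp]: "tr (tr D) = D" by (simp add: tr_def)

lemma Rel_refl: "Rel E D D" unfolding Rel_def by (rule exI[of _ "\<lambda>_. 0"]) simp

lemma Rel_sym: "Rel E D D' \<Longrightarrow> Rel E D' D"
  unfolding Rel_def
  apply (erule exE) subgoal for p by (rule exI[of _ "\<lambda>x. - p x"]) auto done

lemma Rel_trans: "Rel E D D' \<Longrightarrow> Rel E D' D'' \<Longrightarrow> Rel E D D''"
  unfolding Rel_def
proof (elim exE)
  fix p q assume h1: "\<forall>u v. E u v \<longrightarrow> sg D' u v = sg D u v - 2 * (p u - p v)"
    and h2: "\<forall>u v. E u v \<longrightarrow> sg D'' u v = sg D' u v - 2 * (q u - q v)"
  show "\<exists>p. \<forall>u v. E u v \<longrightarrow> sg D'' u v = sg D u v - 2 * (p u - p v)"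
  proof (intro exI allI impI)
    fix u v assume "E u v"
    have a: "sg D' u v = sg D u v - 2 * (p u - p v)" using h1 \<open>E u v\<close> by blast
    have b: "sg D'' u v = sg D' u v - 2 * (q u - q v)" using h2 \<open>E u v\<close> by blast
    show "sg D'' u v = sg D u v - 2 * ((p u + q u) - (p v + q v))" unfolding b a by (simp add: algebra_simps)
  qed
qed

lemma sgE:
  assumes "simple_graph V E"
  shows "\<And>u v. E u v \<Longrightarrow> E v u" "\<And>u v. E u v \<Longrightarrow> u \<in> V \<and> v \<in> V" "\<And>u. \<not> E u u" "finite V"
  using assms by (auto simp: simple_graph_def)

lemma AO_E:
  assumes "D \<in> acyc_orients E"
  shows "\<And>u v. D u v \<Longrightarrow> E u v" "\<And>u v. E u v \<Longrightarrow> D u v \<longleftrightarrow> \<not> D v u"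
    "acyclic {(u,v). D u v}"
  using assms by (auto simp: acyc_orients_def acyclic_orientation_def orientation_def)

lemma click_acyc:
  assumes sg: "simple_graph V E" and D: "D \<in> acyc_orients E" and s: "is_source V D x"
  shows "click x D \<in> acyc_orients E"
proof -
  note sym = sgE(1)[OF sg]
  note or = AO_E[OF D]
  have nx: "\<And>y. \<not> D y x" using s by (auto simp: is_source_def)
  have "orientation E (click x D)"
    unfolding orientation_def click_def
  proof (intro conjI allI impI)
    fix u v assume "(if u = x \<or> v = x then D v u else D u v)"
    then show "E u v" using or(1) sym by (auto split: if_splits)
  next
    fix u v assume e: "E u v"
    have "D u v = (\<not> D v u)" "D v u = (\<not> D u v)" using or(2) e sym by blast+
    then show "(if u = x \<or> v = x then D v u else D u v) = (\<not> (if v = x \<or> u = x then D u v else D v u))"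
      by auto
  qed
  moreover
  let ?r = "{(u,v). D u v}" and ?r' = "{(u,v). click x D u v}"
  have key: "a \<noteq> x \<and> (b = x \<or> (a,b) \<in> ?r\<^sup>+)" if "(a,b) \<in> ?r'\<^sup>+" for a b
    using that
  proof (induction rule: trancl_induct)
    case (base y)
    then show ?case using nx by (auto simp: click_def split: if_splits)
  next
    case (step y z)
    have "y \<noteq> x" using step(2) nx by (auto simp: click_def split: if_splits)
    then have ay: "(a,y) \<in> ?r\<^sup>+" using step(3) by auto
    show ?case
    proof (cases "z = x")
      case True then show ?thesis using step(3) by auto
    next
      case False
      with \<open>y \<noteq> x\<close> step(2) have "(y,z) \<in> ?r" by (auto simp: click_def)
      with ay have "(a,z) \<in> ?r\<^sup>+" by (rule trancl_into_trancl)
      then show ?thesis using step(3) by blast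
    qed
  qed
  have "acyclic ?r'"
    unfolding acyclic_def
  proof
    fix u show "(u,u) \<notin> ?r'\<^sup>+"
    proof
      assume "(u,u) \<in> ?r'\<^sup>+"
      from key[OF this] or(3) show False by (auto simp: acyclic_def)
    qed
  qed
  ultimately show ?thesis by (simp add: acyc_orients_def acyclic_orientation_def)
qed

lemma click_sg:
  assumes sg: "simple_graph V E" and D: "D \<in> acyc_orients E" and s: "is_source V D x"
    and e: "E u v"
  shows "sg (click x D) u v = sg D u v - 2 * ((if u = x then 1 else 0) - (if v = x then 1 else 0))"
proof -
  note sym = sgE(1)[OF sg]
  note or = AO_E[OF D]
  have nx: "\<And>y. \<not> D y x" using s by (auto simp: is_source_def)
  have "u \<noteq> v" using sgE(3)[OF sg] e by auto
  have o: "D u v = (\<not> D v u)" using or(2)[OF e] by blast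
  show ?thesis
  proof (cases "u = x")
    case True
    then show ?thesis using o nx \<open>u \<noteq> v\<close> by (simp add: sg_def click_def)
  next
    case False
    then show ?thesis using o nx by (cases "v = x") (simp_all add: sg_def click_def)
  qed
qed

lemma click_Rel:
  assumes sg: "simple_graph V E" and D: "D \<in> acyc_orients E" and s: "is_source V D x"
  shows "Rel E D (click x D)"
  unfolding Rel_def
  by (rule exI[of _ "\<lambda>y. if y = x then 1 else 0"]) (use click_sg[OF assms] in auto)

lemma kappa_closed:
  assumes sg: "simple_graph V E" and K: "(D, D') \<in> kappa_equiv V E" and D: "D \<in> acyc_orients E"
  shows "D' \<in> acyc_orients E \<and> Rel E D D'"
  using K unfolding kappa_equiv_def
proof (induction rule: rtrancl_induct)
  case base then show ?case using D by (simp add: Rel_refl)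
next
  case (step y z)
  from step.IH have y: "y \<in> acyc_orients E" "Rel E D y" by auto
  from step.hyps(2) show ?case
  proof
    assume "(y,z) \<in> click_step V E"
    then obtain x where "is_source V y x" "z = click x y" by (auto simp: click_step_def)
    then show ?thesis using click_acyc click_Rel sg y Rel_trans by metis
  next
    assume "(y,z) \<in> (click_step V E)\<inverse>"
    then obtain x where "z \<in> acyc_orients E" "is_source V z x" "y = click x z" by (auto simp: click_step_def)
    then show ?thesis using click_Rel sg y Rel_trans Rel_sym by metis
  qed
qed


lemma sg_cases: "sg D u v = 1 \<or> sg D u v = -1" by (simp add: sg_def)

lemma complete_aux:
  assumes sg: "simple_graph V E" and D'o: "\<And>u v. D' u v \<Longrightarrow> E u v"
  shows "\<forall>p D. nat (\<Sum>v\<in>V. p v - m) = n \<longrightarrow> (\<forall>v\<in>V. m \<le> p v) \<longrightarrow> D \<in> acyc_orients E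
     \<longrightarrow> (\<forall>u v. E u v \<longrightarrow> sg D' u v = sg D u v - 2 * (p u - p v)) \<longrightarrow> (D, D') \<in> kappa_equiv V E"
proof (induction n rule: less_induct)
  case (less n)
  note sym = sgE(1)[OF sg] and inV = sgE(2)[OF sg] and fin = sgE(4)[OF sg]
  show ?case
  proof (intro allI impI)
    fix p :: "'a \<Rightarrow> int" and D
    assume n: "nat (\<Sum>v\<in>V. p v - m) = n" and pm: "\<forall>v\<in>V. m \<le> p v" and D: "D \<in> acyc_orients E"
      and rel: "\<forall>u v. E u v \<longrightarrow> sg D' u v = sg D u v - 2 * (p u - p v)"
    note or = AO_E[OF D]
    show "(D, D') \<in> kappa_equiv V E"
    proof (cases "\<forall>v\<in>V. p v = m")
      case True
      have "D' = D"
      proof (intro ext)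
        fix u v
        show "D' u v = D u v"
        proof (cases "E u v")
          case True
          with rel inV \<open>\<forall>v\<in>V. p v = m\<close> have "sg D' u v = sg D u v" by auto
          then show ?thesis by (auto simp: sg_def split: if_splits)
        next
          case False
          then show ?thesis using or(1) D'o by blast
        qed
      qed
      then show ?thesis by (simp add: kappa_equiv_def)
    next
      case False
      then obtain w where w: "w \<in> V" "p w \<noteq> m" by auto
      define M where "M = Max (p ` V)"
      have MV: "M \<in> p ` V" unfolding M_def using fin w(1) by (intro Max_in) auto
      have leM: "\<And>v. v \<in> V \<Longrightarrow> p v \<le> M" unfolding M_def using fin by auto
      have Mm: "m < M" using leM[OF w(1)] pm w by force
      define S where "S = {v\<in>V. p v = M}"
      obtain x0 where x0: "x0 \<in> S" using MV S_def by auto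
      let ?r = "{(u,v). D u v}"
      have "?r \<subseteq> V \<times> V" using or(1) inV by auto
      then have "finite ?r" using fin finite_subset by blast
      then have "wf ?r" using or(3) finite_acyclic_wf by blast
      then obtain x where x: "x \<in> S" and xmin: "\<And>y. (y, x) \<in> ?r \<Longrightarrow> y \<notin> S"
        using wfE_min[of ?r x0 S] x0 by blast
      have xV: "x \<in> V" and px: "p x = M" using x S_def by auto
      have src: "is_source V D x"
        unfolding is_source_def
      proof (intro conjI allI xV)
        fix y show "\<not> D y x"
        proof
          assume Dyx: "D y x"
          then have e: "E y x" using or(1) by blast
          then have yV: "y \<in> V" using inV by blast
          have "y \<notin> S" using xmin Dyx by blast
          then have "p y < M" using leM[OF yV] yV S_def by auto
          moreover have "sg D' y x = sg D y x - 2 * (p y - p x)" using rel e by blast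
          moreover have "sg D y x = 1" using Dyx by (simp add: sg_def)
          ultimately show False using sg_cases[of D' y x] px by auto
        qed
      qed
      define D1 where "D1 = click x D"
      have D1: "D1 \<in> acyc_orients E" unfolding D1_def using click_acyc[OF sg D src] .
      have step: "(D, D1) \<in> kappa_equiv V E"
        unfolding kappa_equiv_def D1_def click_step_def using D src by blast
      define p1 where "p1 = p(x := p x - 1)"
      have pm1: "\<forall>v\<in>V. m \<le> p1 v" using pm Mm px by (auto simp: p1_def)
      have rel1: "\<forall>u v. E u v \<longrightarrow> sg D' u v = sg D1 u v - 2 * (p1 u - p1 v)"
      proof (intro allI impI)
        fix u v assume e: "E u v"
        have a: "sg D1 u v = sg D u v - 2 * ((if u = x then 1 else 0) - (if v = x then 1 else 0))"
          unfolding D1_def using click_sg[OF sg D src e] .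
        have b: "sg D' u v = sg D u v - 2 * (p u - p v)" using rel e by blast
        show "sg D' u v = sg D1 u v - 2 * (p1 u - p1 v)"
          unfolding a b p1_def by (auto simp: algebra_simps)
      qed
      have sumeq: "(\<Sum>v\<in>V. p v - m) = (p x - m) + (\<Sum>v\<in>V - {x}. p v - m)"
        using sum.remove[OF fin xV] .
      have sumeq1: "(\<Sum>v\<in>V. p1 v - m) = (p1 x - m) + (\<Sum>v\<in>V - {x}. p1 v - m)"
        using sum.remove[OF fin xV] .
      have "(\<Sum>v\<in>V - {x}. p1 v - m) = (\<Sum>v\<in>V - {x}. p v - m)"
        by (rule sum.cong) (auto simp: p1_def)
      then have s1: "(\<Sum>v\<in>V. p1 v - m) = (\<Sum>v\<in>V. p v - m) - 1"
        using sumeq sumeq1 by (simp add: p1_def)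
      have "(\<Sum>v\<in>V - {x}. p v - m) \<ge> 0" using pm by (intro sum_nonneg) auto
      then have "(\<Sum>v\<in>V. p v - m) \<ge> 1" using sumeq px Mm by linarith
      then have lt: "nat (\<Sum>v\<in>V. p1 v - m) < n" using s1 n by linarith
      have "(D1, D') \<in> kappa_equiv V E"
        using less.IH[OF lt] pm1 D1 rel1 by blast
      then show ?thesis using step unfolding kappa_equiv_def by (rule rtrancl_trans[rotated])
    qed
  qed
qed


lemma complete:
  assumes sg: "simple_graph V E" and D: "D \<in> acyc_orients E" and D': "D' \<in> acyc_orients E"
    and R: "Rel E D D'"
  shows "(D, D') \<in> kappa_equiv V E"
proof -
  obtain p where p: "\<forall>u v. E u v \<longrightarrow> sg D' u v = sg D u v - 2 * (p u - p v)"
    using R unfolding Rel_def by blast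
  define m where "m = Min (insert 0 (p ` V))"
  have "\<forall>v\<in>V. m \<le> p v" unfolding m_def using sgE(4)[OF sg] by auto
  then show ?thesis
    using complete_aux[OF sg AO_E(1)[OF D'], where m=m and n="nat (\<Sum>v\<in>V. p v - m)"] D p by blast
qed

lemma class_eq:
  assumes sg: "simple_graph V E" and D: "D \<in> acyc_orients E"
  shows "kappa_equiv V E `` {D} = {D'. D' \<in> acyc_orients E \<and> Rel E D D'}"
  using kappa_closed[OF sg _ D] complete[OF sg D] by blast

lemma tr_acyc:
  assumes sg: "simple_graph V E" and D: "D \<in> acyc_orients E"
  shows "tr D \<in> acyc_orients E"
proof -
  note sym = sgE(1)[OF sg]
  note or = AO_E[OF D]
  have "orientation E (tr D)" unfolding orientation_def tr_def
    using or(1,2) sym by blast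
  moreover have "{(u,v). tr D u v} = {(u,v). D u v}\<inverse>" by (auto simp: tr_def)
  then have "acyclic {(u,v). tr D u v}" using or(3) by simp
  ultimately show ?thesis by (simp add: acyc_orients_def acyclic_orientation_def)
qed

lemma tr_Rel:
  assumes sg: "simple_graph V E" and R: "Rel E D D'"
  shows "Rel E (tr D) (tr D')"
proof -
  note sym = sgE(1)[OF sg]
  obtain p where p: "\<forall>u v. E u v \<longrightarrow> sg D' u v = sg D u v - 2 * (p u - p v)"
    using R unfolding Rel_def by blast
  show ?thesis unfolding Rel_def
  proof (intro exI allI impI)
    fix u v assume e: "E u v"
    have "sg D' v u = sg D v u - 2 * (p v - p u)" using p sym[OF e] by blast
    then show "sg (tr D') u v = sg (tr D) u v - 2 * ((\<lambda>x. - p x) u - (\<lambda>x. - p x) v)"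
      by (simp add: sg_def tr_def algebra_simps)
  qed
qed

lemma involution_parity:
  assumes "finite Q" "\<forall>X\<in>Q. f X \<in> Q" "\<forall>X\<in>Q. f (f X) = X"
  shows "even (card Q) \<longleftrightarrow> even (card {X\<in>Q. f X = X})"
  using assms
proof (induction "card Q" arbitrary: Q rule: less_induct)
  case less
  show ?case
  proof (cases "\<exists>X\<in>Q. f X \<noteq> X")
    case False
    then have "{X\<in>Q. f X = X} = Q" by auto
    then show ?thesis by simp
  next
    case True
    then obtain X where X: "X \<in> Q" "f X \<noteq> X" by auto
    let ?Q' = "Q - {X, f X}"
    have fX: "f X \<in> Q" using less X by auto
    have c2: "card {X, f X} = 2" using X by auto
    have "card {X, f X} \<le> card Q" using less.prems(1) X fX by (intro card_mono) auto
    moreover have "card ?Q' = card Q - card {X, f X}"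
      using less.prems(1) X fX by (intro card_Diff_subset) auto
    ultimately have c: "card Q = card ?Q' + 2" using c2 by linarith
    have maps: "\<forall>Y\<in>?Q'. f Y \<in> ?Q'"
    proof
      fix Y assume Y: "Y \<in> ?Q'"
      then have "f Y \<in> Q" "f (f Y) = Y" using less.prems by auto
      moreover have "f X \<in> Q" "f (f X) = X" using less.prems X by auto
      ultimately show "f Y \<in> ?Q'" using Y by auto
    qed
    have inv: "\<forall>Y\<in>?Q'. f (f Y) = Y" using less.prems by auto
    have fixeq: "{Y\<in>?Q'. f Y = Y} = {Y\<in>Q. f Y = Y}"
      using X less.prems(3) by auto
    have "card ?Q' < card Q" using c by linarith
    from less.hyps[OF this _ maps inv] less.prems(1) have
      "even (card ?Q') \<longleftrightarrow> even (card {Y\<in>?Q'. f Y = Y})" by blast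
    then show ?thesis using c fixeq by simp
  qed
qed


lemma Rel_tr_pot:
  assumes sg: "simple_graph V E" and D: "D \<in> acyc_orients E" and R: "Rel E D (tr D)"
  obtains p where "\<forall>u v. E u v \<longrightarrow> sg D u v = p u - p v"
proof -
  obtain p where p: "\<forall>u v. E u v \<longrightarrow> sg (tr D) u v = sg D u v - 2 * (p u - p v)"
    using R unfolding Rel_def by blast
  have "\<forall>u v. E u v \<longrightarrow> sg D u v = p u - p v"
  proof (intro allI impI)
    fix u v assume e: "E u v"
    have o: "D u v = (\<not> D v u)" using AO_E(2)[OF D e] by blast
    have "sg (tr D) u v = - sg D u v" using o by (auto simp: sg_def tr_def)
    then show "sg D u v = p u - p v" using p e by force
  qed
  then show ?thesis using that by blast
qed

lemma bip_of_Rel: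
  assumes sg: "simple_graph V E" and D: "D \<in> acyc_orients E" and R: "Rel E D (tr D)"
  shows "bipartite V E"
proof -
  obtain p where p: "\<forall>u v. E u v \<longrightarrow> sg D u v = p u - p v" using Rel_tr_pot[OF sg D R] by blast
  show ?thesis unfolding bipartite_def
  proof (intro exI[of _ "{v\<in>V. even (p v)}"] conjI allI impI)
    fix u v assume e: "E u v"
    have "p u - p v = 1 \<or> p u - p v = -1" using p e sg_cases[of D u v] by force
    then have "even (p u) \<longleftrightarrow> \<not> even (p v)" by presburger
    then show "(u \<in> {v\<in>V. even (p v)}) = (v \<notin> {v\<in>V. even (p v)})"
      using sgE(2)[OF sg e] by auto
  qed auto
qed

lemma div2_diff: "even ((a::int) - b) \<Longrightarrow> 2 * (a div 2 - b div 2) = a - b"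
  by presburger

definition D0 :: "'a set \<Rightarrow> ('a \<Rightarrow> 'a \<Rightarrow> bool) \<Rightarrow> ('a \<Rightarrow> 'a \<Rightarrow> bool)" where
  "D0 A E = (\<lambda>u v. E u v \<and> u \<in> A)"

lemma D0_acyc:
  assumes sg: "simple_graph V E" and A: "\<forall>u v. E u v \<longrightarrow> (u \<in> A \<longleftrightarrow> v \<notin> A)"
  shows "D0 A E \<in> acyc_orients E"
proof -
  note sym = sgE(1)[OF sg]
  have "orientation E (D0 A E)" unfolding orientation_def D0_def using A sym by blast
  moreover
  let ?r = "{(u,v). D0 A E u v}"
  have "trans ?r" unfolding trans_def D0_def using A by blast
  then have "?r\<^sup>+ = ?r" by (rule trancl_id)
  then have "acyclic ?r" unfolding acyclic_def D0_def using sgE(3)[OF sg] by auto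
  ultimately show ?thesis by (simp add: acyc_orients_def acyclic_orientation_def)
qed

lemma D0_fixed:
  assumes sg: "simple_graph V E" and A: "\<forall>u v. E u v \<longrightarrow> (u \<in> A \<longleftrightarrow> v \<notin> A)"
  shows "Rel E (D0 A E) (tr (D0 A E))"
  unfolding Rel_def
proof (intro exI[of _ "\<lambda>x. if x \<in> A then 1 else 0"] allI impI)
  fix u v assume e: "E u v"
  have e': "E v u" using sgE(1)[OF sg e] .
  show "sg (tr (D0 A E)) u v = sg (D0 A E) u v - 2 * ((if u \<in> A then 1 else 0) - (if v \<in> A then 1 else 0))"
  proof -
    have "u \<in> A \<longleftrightarrow> v \<notin> A" using A e by blast
    then show ?thesis using e e' by (cases "u \<in> A") (simp_all add: sg_def tr_def D0_def)
  qed
qed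

lemma Rel_to_D0:
  assumes sg: "simple_graph V E" and A: "\<forall>u v. E u v \<longrightarrow> (u \<in> A \<longleftrightarrow> v \<notin> A)"
    and D: "D \<in> acyc_orients E" and R: "Rel E D (tr D)"
  shows "Rel E D (D0 A E)"
proof -
  obtain p where p: "\<forall>u v. E u v \<longrightarrow> sg D u v = p u - p v" using Rel_tr_pot[OF sg D R] by blast
  define c :: "'a \<Rightarrow> int" where "c x = (if x \<in> A then 1 else 0)" for x
  define q where "q x = (p x - c x) div 2" for x
  show ?thesis unfolding Rel_def
  proof (intro exI[of _ q] allI impI)
    fix u v assume e: "E u v"
    have e': "E v u" using sgE(1)[OF sg e] .
    have iff: "u \<in> A \<longleftrightarrow> v \<notin> A" using A e by blast
    have s0: "sg (D0 A E) u v = c u - c v" using iff e e' by (cases "u \<in> A") (simp_all add: sg_def D0_def c_def)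
    have h1: "p u - p v = 1 \<or> p u - p v = -1" using p e sg_cases[of D u v] by force
    have h2: "c u - c v = 1 \<or> c u - c v = -1" using iff by (cases "u \<in> A") (simp_all add: c_def)
    have ev: "even ((p u - c u) - (p v - c v))" using h1 h2 by presburger
    have "2 * (q u - q v) = (p u - c u) - (p v - c v)" unfolding q_def using div2_diff[OF ev] .
    then show "sg (D0 A E) u v = sg D u v - 2 * (q u - q v)" using s0 p e by simp
  qed
qed

lemma finite_AO:
  assumes sg: "simple_graph V E"
  shows "finite (acyc_orients E)"
proof -
  let ?g = "\<lambda>D. {(u,v). D u v}"
  have "inj_on ?g (acyc_orients E)"
  proof (rule inj_onI)
    fix D1 D2 :: "'a \<Rightarrow> 'a \<Rightarrow> bool" assume h: "?g D1 = ?g D2"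
    show "D1 = D2"
    proof (intro ext)
      fix u v
      have "D1 u v \<longleftrightarrow> (u,v) \<in> ?g D1" by simp
      also have "\<dots> \<longleftrightarrow> (u,v) \<in> ?g D2" using h by simp
      also have "\<dots> \<longleftrightarrow> D2 u v" by simp
      finally show "D1 u v = D2 u v" .
    qed
  qed
  moreover have "?g ` acyc_orients E \<subseteq> Pow (V \<times> V)"
  proof
    fix X assume "X \<in> ?g ` acyc_orients E"
    then obtain D where D: "D \<in> acyc_orients E" "X = ?g D" by blast
    have "\<And>u v. D u v \<Longrightarrow> u \<in> V \<and> v \<in> V" using AO_E(1)[OF D(1)] sgE(2)[OF sg] by blast
    then show "X \<in> Pow (V \<times> V)" using D(2) by auto
  qed
  moreover have "finite (Pow (V \<times> V))" using sgE(4)[OF sg] by simp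
  ultimately have "finite (?g ` acyc_orients E)" using finite_subset by blast
  with \<open>inj_on ?g (acyc_orients E)\<close> show ?thesis using finite_imageD by blast
qed

theorem corollary1:
  fixes V :: "'a set" and E :: "'a \<Rightarrow> 'a \<Rightarrow> bool"
  assumes "simple_graph V E" and "connected_graph V E"
  shows "bipartite V E \<longleftrightarrow> odd (kappa V E)"
proof -
  note sg = assms(1)
  define K where "K = kappa_equiv V E"
  define AO where "AO = acyc_orients E"
  define cls where "cls D = K `` {D}" for D
  define Q where "Q = cls ` AO"
  have kQ: "kappa V E = card Q"
    unfolding kappa_def Q_def cls_def K_def AO_def quotient_def UNION_singleton_eq_range by simp
  have finQ: "finite Q" unfolding Q_def AO_def using finite_AO[OF sg] by blast
  have ceq: "cls D = {D'. D' \<in> AO \<and> Rel E D D'}" if "D \<in> AO" for D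
    using class_eq[OF sg] that unfolding cls_def K_def AO_def by blast
  have trAO: "tr D \<in> AO" if "D \<in> AO" for D using tr_acyc[OF sg] that unfolding AO_def by blast
  have ftr: "tr ` cls D = cls (tr D)" if D: "D \<in> AO" for D
  proof
    show "tr ` cls D \<subseteq> cls (tr D)"
      using ceq[OF D] ceq[OF trAO[OF D]] trAO tr_Rel[OF sg] by auto
  next
    show "cls (tr D) \<subseteq> tr ` cls D"
    proof
      fix D'' assume "D'' \<in> cls (tr D)"
      then have h: "D'' \<in> AO" "Rel E (tr D) D''" using ceq[OF trAO[OF D]] by auto
      then have "tr D'' \<in> cls D" using ceq[OF D] trAO tr_Rel[OF sg, of "tr D" D''] by auto
      then show "D'' \<in> tr ` cls D" by (metis image_eqI tr_tr)
    qed
  qed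
  have fixchar: "tr ` cls D = cls D \<longleftrightarrow> Rel E D (tr D)" if D: "D \<in> AO" for D
  proof
    assume "tr ` cls D = cls D"
    then have "cls (tr D) = cls D" using ftr[OF D] by simp
    moreover have "tr D \<in> cls (tr D)" using ceq[OF trAO[OF D]] trAO[OF D] Rel_refl by blast
    ultimately show "Rel E D (tr D)" using ceq[OF D] by auto
  next
    assume R: "Rel E D (tr D)"
    have "cls (tr D) = cls D"
      using ceq[OF D] ceq[OF trAO[OF D]] R Rel_sym Rel_trans by blast
    then show "tr ` cls D = cls D" using ftr[OF D] by simp
  qed
  have maps: "\<forall>X\<in>Q. tr ` X \<in> Q" unfolding Q_def using ftr trAO by auto
  have inv: "\<forall>X\<in>Q. tr ` (tr ` X) = X" by (simp add: image_image)
  have par: "even (card Q) \<longleftrightarrow> even (card {X\<in>Q. tr ` X = X})"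
    using involution_parity[OF finQ maps inv] .
  show ?thesis
  proof
    assume "bipartite V E"
    then obtain A where A: "\<forall>u v. E u v \<longrightarrow> (u \<in> A \<longleftrightarrow> v \<notin> A)" unfolding bipartite_def by blast
    have d0: "D0 A E \<in> AO" using D0_acyc[OF sg A] unfolding AO_def .
    have "{X\<in>Q. tr ` X = X} = {cls (D0 A E)}"
    proof
      show "{X\<in>Q. tr ` X = X} \<subseteq> {cls (D0 A E)}"
      proof
        fix X assume "X \<in> {X\<in>Q. tr ` X = X}"
        then obtain D where D: "D \<in> AO" "X = cls D" "tr ` X = X" unfolding Q_def by auto
        then have "Rel E D (tr D)" using fixchar by blast
        then have R: "Rel E D (D0 A E)" using Rel_to_D0[OF sg A] D(1) unfolding AO_def by blast
        have "cls D = cls (D0 A E)"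
          using ceq[OF D(1)] ceq[OF d0] R Rel_sym Rel_trans by blast
        then show "X \<in> {cls (D0 A E)}" using D by simp
      qed
    next
      show "{cls (D0 A E)} \<subseteq> {X\<in>Q. tr ` X = X}"
        using d0 fixchar[OF d0] D0_fixed[OF sg A] unfolding Q_def by auto
    qed
    then show "odd (kappa V E)" using par kQ by simp
  next
    assume odd: "odd (kappa V E)"
    show "bipartite V E"
    proof (rule ccontr)
      assume nb: "\<not> bipartite V E"
      have E0: "{X\<in>Q. tr ` X = X} = {}"
      proof (rule ccontr)
        assume "{X\<in>Q. tr ` X = X} \<noteq> {}"
        then obtain D where D: "D \<in> AO" "tr ` cls D = cls D" unfolding Q_def by auto
        then have "Rel E D (tr D)" using fixchar by blast
        then show False using bip_of_Rel[OF sg] D(1) nb unfolding AO_def by blast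
      qed
      have "even (card Q)" using par unfolding E0 by simp
      then show False using kQ odd by simp
    qed
  qed
qed

end
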